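(* $c(9)\ge 6$.
   Context: $\mathbb{F}_q$ is the finite field with $q$ elements. Hamming distance $d(u,v)=|\{i:u_i\ne v_i\}|$ on $\mathbb{F}_q^3$; $B(u)=\{v:d(u,v)\le1\}$; $E(u)=\bigcup_{\lambda\in\mathbb{F}_q}B(\lambda u)$. A set $\mathcal{H}\subseteq\mathbb{F}_q^3$ is a short covering if $\bigcup_{h\in\mathcal{H}}E(h)=\mathbb{F}_q^3$; $c(q)$ is the minimum cardinality of a short covering of $\mathbb{F}_q^3$. *)

theory Defs
  imports Main
begin

definition hamming :: "'a \<times> 'a \<times> 'a \<Rightarrow> 'a \<times> 'a \<times> 'a \<Rightarrow> nat" where
  "hamming u v = card {i::nat. i < 3 \<and> [fst u, fst (snd u), snd (snd u)] ! i \<noteq> [fst v, fst (snd v), snd (snd v)] ! i}"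

definition ball1 :: "'a \<times> 'a \<times> 'a \<Rightarrow> ('a \<times> 'a \<times> 'a) set" where
  "ball1 u = {v. hamming u v \<le> 1}"

definition smul3 :: "'a::times \<Rightarrow> 'a \<times> 'a \<times> 'a \<Rightarrow> 'a \<times> 'a \<times> 'a" where
  "smul3 c u = (c * fst u, c * fst (snd u), c * snd (snd u))"

definition Ext :: "'a::field \<times> 'a \<times> 'a \<Rightarrow> ('a \<times> 'a \<times> 'a) set" where
  "Ext u = (\<Union>c. ball1 (smul3 c u))"

definition short_covering :: "('a::field \<times> 'a \<times> 'a) set \<Rightarrow> bool" where
  "short_covering H \<longleftrightarrow> (\<Union>h\<in>H. Ext h) = UNIV"

end

theory Submission
  imports Defs
begin
lemma lt3: "(i::nat) < 3 \<longleftrightarrow> i = 0 \<or> i = 1 \<or> i = 2" by auto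
lemma set3: "{i::nat. i < 3 \<and> P i} = (if P 0 then {0} else {}) \<union> (if P 1 then {1} else {}) \<union> (if P 2 then {2::nat} else {})"
proof (rule set_eqI)
  fix i show "i \<in> {i::nat. i < 3 \<and> P i} \<longleftrightarrow> i \<in> (if P 0 then {0} else {}) \<union> (if P 1 then {1} else {}) \<union> (if P 2 then {2::nat} else {})"
    by (cases "i = 0"; cases "i = 1"; cases "i = 2") auto
qed
lemma hamming_le1: "hamming (a1,a2,a3) (b1,b2,b3) \<le> Suc 0 \<longleftrightarrow> (a1=b1 \<and> a2=b2) \<or> (a1=b1 \<and> a3=b3) \<or> (a2=b2 \<and> a3=b3)"
  unfolding hamming_def set3 by auto
lemma Ext_iff: "(v1,v2,v3) \<in> Ext (h1,h2,h3) \<longleftrightarrow> (\<exists>c. (c*h1 = v1 \<and> c*h2 = v2) \<or> (c*h1 = v1 \<and> c*h3 = v3) \<or> (c*h2 = v2 \<and> c*h3 = v3))"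
  unfolding Ext_def ball1_def smul3_def by (auto simp: hamming_le1)

lemma pick:
  fixes X :: "'a::{field,finite} set"
  assumes "card (UNIV :: 'a set) = 9" "card X \<le> 7"
  shows "\<exists>z. z \<noteq> 0 \<and> z \<notin> X"
proof (rule ccontr)
  assume "\<not> ?thesis"
  hence "UNIV - {0} \<subseteq> X" by auto
  hence "card (UNIV - {0::'a}) \<le> card X" by (intro card_mono) auto
  moreover have "card (UNIV - {0::'a}) = 8" using assms(1) by (simp add: card_Diff_singleton)
  ultimately show False using assms(2) by simp
qed

theorem proposition20:
  fixes H :: "('a::{field,finite} \<times> 'a \<times> 'a) set"
  assumes "card (UNIV :: 'a set) = 9"
    and "short_covering H"
  shows "card H \<ge> 6"
proof (rule ccontr)
  assume "\<not> 6 \<le> card H"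
  hence cH: "card H \<le> 5" by simp
  have nz: "card (UNIV - {0::'a}) = 8" using assms(1) by (simp add: card_Diff_singleton)
  have cov: "\<exists>h\<in>H. \<exists>c. (c*fst h = v1 \<and> c*fst(snd h) = v2) \<or> (c*fst h = v1 \<and> c*snd(snd h) = v3) \<or> (c * fst (snd h) = v2 \<and> c*snd(snd h) = v3)" for v1 v2 v3
  proof -
    have "(v1,v2,v3) \<in> (\<Union>h\<in>H. Ext h)" using assms(2) unfolding short_covering_def by simp
    then obtain h where h: "h\<in>H" "(v1,v2,v3) \<in> Ext h" by blast
    obtain h1 h2 h3 where "h = (h1,h2,h3)" by (cases h)
    with h(2) have "\<exists>c. (c*fst h = v1 \<and> c*fst(snd h) = v2) \<or> (c*fst h = v1 \<and> c*snd(snd h) = v3) \<or> (c * fst (snd h) = v2 \<and> c*snd(snd h) = v3)"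
      by (simp add: Ext_iff)
    with h(1) show ?thesis by blast
  qed
  define S12 where "S12 = {h\<in>H. fst h \<noteq> 0 \<and> fst (snd h) \<noteq> 0}"
  define S13 where "S13 = {h\<in>H. fst h \<noteq> 0 \<and> snd (snd h) \<noteq> 0}"
  define S23 where "S23 = {h\<in>H. fst (snd h) \<noteq> 0 \<and> snd (snd h) \<noteq> 0}"
  define A where "A = (\<lambda>h. fst (snd h) / fst h) ` S12"
  define B where "B = (\<lambda>h. snd (snd h) / fst h) ` S13"
  define C where "C = (\<lambda>h. snd (snd h) / fst (snd h)) ` S23"
  define T where "T = {h\<in>H. fst h \<noteq> 0 \<and> fst (snd h) \<noteq> 0 \<and> snd (snd h) \<noteq> 0}"
  define W12 where "W12 = {h\<in>H. fst h \<noteq> 0 \<and> fst (snd h) \<noteq> 0 \<and> snd (snd h) = 0}"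
  define W13 where "W13 = {h\<in>H. fst h \<noteq> 0 \<and> fst (snd h) = 0 \<and> snd (snd h) \<noteq> 0}"
  define W23 where "W23 = {h\<in>H. fst h = 0 \<and> fst (snd h) \<noteq> 0 \<and> snd (snd h) \<noteq> 0}"
  have cA: "card A \<le> card H" unfolding A_def S12_def
    by (rule order_trans[OF card_image_le]) (auto intro: card_mono)
  have cB: "card B \<le> card H" unfolding B_def S13_def
    by (rule order_trans[OF card_image_le]) (auto intro: card_mono)
  have cC: "card C \<le> card H" unfolding C_def S23_def
    by (rule order_trans[OF card_image_le]) (auto intro: card_mono)
  have e3: "\<exists>h\<in>H. snd (snd h) = 0 \<and> (fst h \<noteq> 0 \<or> fst (snd h) \<noteq> 0)"
  proof (rule ccontr)
    assume n: "\<not> ?thesis"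
    have "UNIV - {0} \<subseteq> A"
    proof
      fix s :: 'a assume "s \<in> UNIV - {0}"
      hence s: "s \<noteq> 0" by simp
      from cov[of 1 s 0] obtain h c where hH: "h\<in>H" and
        hc: "(c*fst h = 1 \<and> c*fst(snd h) = s) \<or> (c*fst h = 1 \<and> c*snd(snd h) = 0) \<or> (c*fst(snd h) = s \<and> c*snd(snd h) = 0)" by blast
      then consider "c*fst h = 1" "c*fst(snd h) = s" | "c*fst h = 1" "c*snd(snd h) = 0" | "c*fst(snd h) = s" "c*snd(snd h) = 0" by blast
      then show "s \<in> A"
      proof cases
        case 1
        hence "h \<in> S12" using hH s unfolding S12_def by auto
        moreover have "s = fst (snd h) / fst h" using 1 by (metis divide_self_if mult.commute mult_1_right nonzero_mult_div_cancel_left times_divide_eq_right mult_zero_left zero_neq_one)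
        ultimately show ?thesis unfolding A_def by blast
      next
        case 2 thus ?thesis using n hH by auto
      next
        case 3 thus ?thesis using n hH s by auto
      qed
    qed
    hence "card (UNIV - {0::'a}) \<le> card A" by (intro card_mono) auto
    thus False using nz cA cH by simp
  qed
  have e2: "\<exists>h\<in>H. fst (snd h) = 0 \<and> (fst h \<noteq> 0 \<or> snd (snd h) \<noteq> 0)"
  proof (rule ccontr)
    assume n: "\<not> ?thesis"
    have "UNIV - {0} \<subseteq> B"
    proof
      fix s :: 'a assume "s \<in> UNIV - {0}"
      hence s: "s \<noteq> 0" by simp
      from cov[of 1 0 s] obtain h c where hH: "h\<in>H" and
        hc: "(c*fst h = 1 \<and> c*fst(snd h) = 0) \<or> (c*fst h = 1 \<and> c*snd(snd h) = s) \<or> (c*fst(snd h) = 0 \<and> c*snd(snd h) = s)" by blast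
      then consider "c*fst h = 1" "c*fst(snd h) = 0" | "c*fst h = 1" "c*snd(snd h) = s" | "c*fst(snd h) = 0" "c*snd(snd h) = s" by blast
      then show "s \<in> B"
      proof cases
        case 2
        hence "h \<in> S13" using hH s unfolding S13_def by auto
        moreover have "s = snd (snd h) / fst h" using 2 by (metis divide_self_if mult.commute mult_1_right nonzero_mult_div_cancel_left times_divide_eq_right mult_zero_left zero_neq_one)
        ultimately show ?thesis unfolding B_def by blast
      next
        case 1 thus ?thesis using n hH by auto
      next
        case 3 thus ?thesis using n hH s by auto
      qed
    qed
    hence "card (UNIV - {0::'a}) \<le> card B" by (intro card_mono) auto
    thus False using nz cB cH by simp
  qed
  have e1: "\<exists>h\<in>H. fst h = 0 \<and> (fst (snd h) \<noteq> 0 \<or> snd (snd h) \<noteq> 0)"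
  proof (rule ccontr)
    assume n: "\<not> ?thesis"
    have "UNIV - {0} \<subseteq> C"
    proof
      fix s :: 'a assume "s \<in> UNIV - {0}"
      hence s: "s \<noteq> 0" by simp
      from cov[of 0 1 s] obtain h c where hH: "h\<in>H" and
        hc: "(c*fst h = 0 \<and> c*fst(snd h) = 1) \<or> (c*fst h = 0 \<and> c*snd(snd h) = s) \<or> (c*fst(snd h) = 1 \<and> c*snd(snd h) = s)" by blast
      then consider "c*fst h = 0" "c*fst(snd h) = 1" | "c*fst h = 0" "c*snd(snd h) = s" | "c*fst(snd h) = 1" "c*snd(snd h) = s" by blast
      then show "s \<in> C"
      proof cases
        case 3
        hence "h \<in> S23" using hH s unfolding S23_def by auto
        moreover have "s = snd (snd h) / fst (snd h)" using 3 by (metis divide_self_if mult.commute mult_1_right nonzero_mult_div_cancel_left times_divide_eq_right mult_zero_left zero_neq_one)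
        ultimately show ?thesis unfolding C_def by blast
      next
        case 1 thus ?thesis using n hH by auto
      next
        case 2 thus ?thesis using n hH s by auto
      qed
    qed
    hence "card (UNIV - {0::'a}) \<le> card C" by (intro card_mono) auto
    thus False using nz cC cH by simp
  qed
  obtain g3 where g3: "g3 \<in> H" "snd (snd g3) = 0" "fst g3 \<noteq> 0 \<or> fst (snd g3) \<noteq> 0" using e3 by blast
  obtain g2 where g2: "g2 \<in> H" "fst (snd g2) = 0" "fst g2 \<noteq> 0 \<or> snd (snd g2) \<noteq> 0" using e2 by blast
  obtain g1 where g1: "g1 \<in> H" "fst g1 = 0" "fst (snd g1) \<noteq> 0 \<or> snd (snd g1) \<noteq> 0" using e1 by blast
  have finH: "finite H" by simp
  have TH: "T \<subseteq> H" unfolding T_def by auto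
  have n2: "2 \<le> card (H - T)"
  proof -
    have gs: "{g3, g2, g1} \<subseteq> H - T" using g1 g2 g3 unfolding T_def by auto
    have "2 \<le> card {g3, g2, g1}"
    proof (cases "g3 = g2")
      case True
      hence "g3 \<noteq> g1" using g1 g2 g3 by auto
      thus ?thesis using True by simp
    next
      case False
      hence "2 \<le> card {g3, g2}" by simp
      also have "\<dots> \<le> card {g3, g2, g1}" by (intro card_mono) auto
      finally show ?thesis .
    qed
    also have "\<dots> \<le> card (H - T)" using gs by (intro card_mono) auto
    finally show ?thesis .
  qed
  have cHT: "card H = card T + card (H - T)" using TH finH
    by (metis card_Diff_subset card_mono le_add_diff_inverse finite_subset)
  have cS12: "card S12 = card T + card W12"
  proof -
    have "S12 = T \<union> W12" "T \<inter> W12 = {}" unfolding S12_def T_def W12_def by auto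
    thus ?thesis by (simp add: card_Un_disjoint)
  qed
  have cS13: "card S13 = card T + card W13"
  proof -
    have "S13 = T \<union> W13" "T \<inter> W13 = {}" unfolding S13_def T_def W13_def by auto
    thus ?thesis by (simp add: card_Un_disjoint)
  qed
  have cS23: "card S23 = card T + card W23"
  proof -
    have "S23 = T \<union> W23" "T \<inter> W23 = {}" unfolding S23_def T_def W23_def by auto
    thus ?thesis by (simp add: card_Un_disjoint)
  qed
  have cW: "card W12 + card W13 + card W23 \<le> card (H - T)"
  proof -
    have d1: "W12 \<inter> W13 = {}" "(W12 \<union> W13) \<inter> W23 = {}" unfolding W12_def W13_def W23_def by auto
    have "card (W12 \<union> W13 \<union> W23) = card W12 + card W13 + card W23"
      using d1 by (simp add: card_Un_disjoint)
    moreover have "W12 \<union> W13 \<union> W23 \<subseteq> H - T" unfolding W12_def W13_def W23_def T_def by auto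
    hence "card (W12 \<union> W13 \<union> W23) \<le> card (H - T)" by (intro card_mono) auto
    ultimately show ?thesis by simp
  qed
  have a: "card A \<le> card T + card W12" unfolding A_def using cS12 card_image_le[of S12] by simp
  have b: "card B \<le> card T + card W13" unfolding B_def using cS13 card_image_le[of S13] by simp
  have c: "card C \<le> card T + card W23" unfolding C_def using cS23 card_image_le[of S23] by simp
  have sum: "card A + card B + card C \<le> 11" using a b c cW cHT cH n2 by linarith
  have unc: False if s: "s \<noteq> 0" and t: "t \<noteq> 0" and sA: "s \<notin> A" and tB: "t \<notin> B" and tsC: "t / s \<notin> C" for s t
  proof -
    from cov[of 1 s t] obtain h c where hH: "h\<in>H" and
      hc: "(c*fst h = 1 \<and> c*fst(snd h) = s) \<or> (c*fst h = 1 \<and> c*snd(snd h) = t) \<or> (c*fst(snd h) = s \<and> c*snd(snd h) = t)" by blast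
    then consider "c*fst h = 1" "c*fst(snd h) = s" | "c*fst h = 1" "c*snd(snd h) = t" | "c*fst(snd h) = s" "c*snd(snd h) = t" by blast
    then show False
    proof cases
      case 1
      hence "h \<in> S12" using hH s unfolding S12_def by auto
      moreover have "s = fst (snd h) / fst h" using 1 by (metis divide_self_if mult.commute mult_1_right nonzero_mult_div_cancel_left times_divide_eq_right mult_zero_left zero_neq_one)
      ultimately show ?thesis using sA unfolding A_def by blast
    next
      case 2
      hence "h \<in> S13" using hH t unfolding S13_def by auto
      moreover have "t = snd (snd h) / fst h" using 2 by (metis divide_self_if mult.commute mult_1_right nonzero_mult_div_cancel_left times_divide_eq_right mult_zero_left zero_neq_one)
      ultimately show ?thesis using tB unfolding B_def by blast
    next
      case 3
      hence "h \<in> S23" using hH s t unfolding S23_def by auto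
      moreover have "t / s = snd (snd h) / fst (snd h)" using 3 s by (metis mult_divide_mult_cancel_left_if mult_zero_left)
      ultimately show ?thesis using tsC unfolding C_def by blast
    qed
  qed
  consider "card B + card C \<le> 7" | "card A + card C \<le> 7" | "card A + card B \<le> 7" using sum by linarith
  then show False
  proof cases
    case 1
    obtain s where s: "s \<noteq> 0" "s \<notin> A" using pick[OF assms(1), of A] cA cH by auto
    have "card (B \<union> (\<lambda>x. s * x) ` C) \<le> 7"
      using 1 card_Un_le[of B "(\<lambda>x. s * x) ` C"] card_image_le[of C "\<lambda>x. s * x"] by simp
    then obtain t where t: "t \<noteq> 0" "t \<notin> B \<union> (\<lambda>x. s * x) ` C" using pick[OF assms(1)] by blast
    have "t / s \<notin> C"
    proof
      assume "t / s \<in> C"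
      hence "s * (t / s) \<in> (\<lambda>x. s * x) ` C" by blast
      thus False using t s by simp
    qed
    thus False using unc[of s t] s t by blast
  next
    case 2
    obtain t where t: "t \<noteq> 0" "t \<notin> B" using pick[OF assms(1), of B] cB cH by auto
    have "card (A \<union> (\<lambda>x. t / x) ` C) \<le> 7"
      using 2 card_Un_le[of A "(\<lambda>x. t / x) ` C"] card_image_le[of C "\<lambda>x. t / x"] by simp
    then obtain s where s: "s \<noteq> 0" "s \<notin> A \<union> (\<lambda>x. t / x) ` C" using pick[OF assms(1)] by blast
    have "t / s \<notin> C"
    proof
      assume "t / s \<in> C"
      hence "t / (t / s) \<in> (\<lambda>x. t / x) ` C" by blast
      thus False using t s by simp
    qed
    thus False using unc[of s t] s t by blast
  next
    case 3
    obtain u where u: "u \<noteq> 0" "u \<notin> C" using pick[OF assms(1), of C] cC cH by auto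
    have "card (A \<union> (\<lambda>x. x / u) ` B) \<le> 7"
      using 3 card_Un_le[of A "(\<lambda>x. x / u) ` B"] card_image_le[of B "\<lambda>x. x / u"] by simp
    then obtain s where s: "s \<noteq> 0" "s \<notin> A \<union> (\<lambda>x. x / u) ` B" using pick[OF assms(1)] by blast
    have "u * s \<notin> B"
    proof
      assume "u * s \<in> B"
      hence "(u * s) / u \<in> (\<lambda>x. x / u) ` B" by blast
      thus False using u s by simp
    qed
    moreover have "(u * s) / s = u" using s by simp
    ultimately show False using unc[of s "u * s"] s u by auto
  qed
qed
end
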